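(* Let $G$ be an amenable group with finitely additive left-invariant mean $\mu$, let $X\subset G$ be a symmetric subset containing the identity, and let $m\in\mathbb{N}$. Suppose $\mu(X)\ge\frac{1}{m}$. Then the subgroup $\langle X\rangle$ generated by $X$ equals $X^{3m-1}$.
   Context: A finitely additive left-invariant mean is a positive linear functional $\int\cdot\,d\mu$ on $\ell^\infty(G)$ with $\int1_G\,d\mu=1$ and $\int f(g^{-1}\cdot)\,d\mu=\int f\,d\mu$; $\mu(X)=\int1_X\,d\mu$. $X^k$ is the set of products of $k$ elements of $X$. *)

theory Defs
  imports Complex_Main "HOL-Algebra.Generated_Groups"
begin

definition linf :: "('a, 'b) monoid_scheme \<Rightarrow> ('a \<Rightarrow> real) set" where
  "linf G = {f. \<exists>C. \<forall>x\<in>carrier G. \<bar>f x\<bar> \<le> C}"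

definition left_invariant_mean :: "('a, 'b) monoid_scheme \<Rightarrow> (('a \<Rightarrow> real) \<Rightarrow> real) \<Rightarrow> bool" where
  "left_invariant_mean G \<mu> \<longleftrightarrow>
     (\<forall>f\<in>linf G. \<forall>g\<in>linf G. \<mu> (\<lambda>x. f x + g x) = \<mu> f + \<mu> g) \<and>
     (\<forall>f\<in>linf G. \<forall>c. \<mu> (\<lambda>x. c * f x) = c * \<mu> f) \<and>
     (\<forall>f\<in>linf G. (\<forall>x\<in>carrier G. 0 \<le> f x) \<longrightarrow> 0 \<le> \<mu> f) \<and>
     \<mu> (\<lambda>_. 1) = 1 \<and>
     (\<forall>f\<in>linf G. \<forall>g\<in>carrier G. \<mu> (\<lambda>x. f (inv\<^bsub>G\<^esub> g \<otimes>\<^bsub>G\<^esub> x)) = \<mu> f)"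

definition mean_measure :: "(('a \<Rightarrow> real) \<Rightarrow> real) \<Rightarrow> 'a set \<Rightarrow> real" where
  "mean_measure \<mu> X = \<mu> (\<lambda>x. if x \<in> X then 1 else 0)"

fun set_pow :: "('a, 'b) monoid_scheme \<Rightarrow> 'a set \<Rightarrow> nat \<Rightarrow> 'a set" where
  "set_pow G X 0 = {\<one>\<^bsub>G\<^esub>}"
| "set_pow G X (Suc k) = {x \<otimes>\<^bsub>G\<^esub> y | x y. x \<in> X \<and> y \<in> set_pow G X k}"

end

theory Submission
  imports Defs
begin

context group
begin

lemma sp_carrier: "X \<subseteq> carrier G \<Longrightarrow> set_pow G X k \<subseteq> carrier G"
  by (induction k) auto

lemma sp_mono1: "X \<subseteq> carrier G \<Longrightarrow> \<one> \<in> X \<Longrightarrow> set_pow G X k \<subseteq> set_pow G X (Suc k)"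
proof (induction k)
  case 0 then show ?case by force
next
  case (Suc k)
  show ?case
  proof
    fix z assume "z \<in> set_pow G X (Suc k)"
    then obtain x y where "z = x \<otimes> y" "x \<in> X" "y \<in> set_pow G X k" by auto
    have "y \<in> set_pow G X (Suc k)" using Suc \<open>y \<in> set_pow G X k\<close> by blast
    then show "z \<in> set_pow G X (Suc (Suc k))" using \<open>z = x \<otimes> y\<close> \<open>x \<in> X\<close> by auto
  qed
qed

lemma sp_mono: "X \<subseteq> carrier G \<Longrightarrow> \<one> \<in> X \<Longrightarrow> k \<le> l \<Longrightarrow> set_pow G X k \<subseteq> set_pow G X l"
proof (induction l)
  case 0 then show ?case by simp
next
  case (Suc l)
  then show ?case using sp_mono1[of X l]
    by (metis le_Suc_eq order_refl order_trans)
qed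

lemma sp_add: "X \<subseteq> carrier G \<Longrightarrow> a \<in> set_pow G X i \<Longrightarrow> b \<in> set_pow G X j \<Longrightarrow> a \<otimes> b \<in> set_pow G X (i + j)"
proof (induction i arbitrary: a)
  case 0 then show ?case using sp_carrier[of X j] by auto
next
  case (Suc i)
  then obtain x y where xy: "a = x \<otimes> y" "x \<in> X" "y \<in> set_pow G X i" by auto
  have "y \<otimes> b \<in> set_pow G X (i + j)" using Suc xy by auto
  moreover have "a \<otimes> b = x \<otimes> (y \<otimes> b)" using xy Suc.prems sp_carrier[of X i] sp_carrier[of X j]
    by (auto intro!: m_assoc)
  ultimately show ?case using xy by auto
qed

lemma sp_one: "X \<subseteq> carrier G \<Longrightarrow> x \<in> X \<Longrightarrow> x \<in> set_pow G X (Suc 0)"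
proof -
  assume "X \<subseteq> carrier G" "x \<in> X"
  then have "x = x \<otimes> \<one>" by auto
  then show ?thesis using \<open>x \<in> X\<close> by auto
qed

lemma sp_inv: "X \<subseteq> carrier G \<Longrightarrow> \<forall>x\<in>X. inv x \<in> X \<Longrightarrow> a \<in> set_pow G X k \<Longrightarrow> inv a \<in> set_pow G X k"
proof (induction k arbitrary: a)
  case 0 then show ?case by auto
next
  case (Suc k)
  then obtain x y where xy: "a = x \<otimes> y" "x \<in> X" "y \<in> set_pow G X k" by auto
  have yc: "y \<in> carrier G" using xy Suc.prems sp_carrier by blast
  have xc: "x \<in> carrier G" using xy Suc.prems by blast
  have "inv a = inv y \<otimes> inv x" using xy xc yc by (simp add: inv_mult_group)
  moreover have "inv y \<in> set_pow G X k" using Suc xy by auto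
  moreover have "inv x \<in> set_pow G X (Suc 0)" using sp_one Suc.prems xy by blast
  ultimately show ?case using sp_add[OF Suc.prems(1), of "inv y" k "inv x" "Suc 0"] by simp
qed

lemma sp_gen: "X \<subseteq> carrier G \<Longrightarrow> set_pow G X k \<subseteq> generate G X"
proof (induction k)
  case 0 then show ?case by (auto intro: generate.one)
next
  case (Suc k)
  then show ?case by (auto intro: generate.eng generate.incl)
qed

lemma gen_sp:
  assumes "X \<subseteq> carrier G" "\<forall>x\<in>X. inv x \<in> X" "z \<in> generate G X"
  shows "\<exists>k. z \<in> set_pow G X k"
  using assms(3)
proof (induction rule: generate.induct)
  case one then show ?case by (rule exI[of _ 0]) simp
next
  case (incl h) then show ?case using sp_one assms by blast
next
  case (inv h) then show ?case using sp_one assms by blast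
next
  case (eng h1 h2)
  then obtain i j where "h1 \<in> set_pow G X i" "h2 \<in> set_pow G X j" by blast
  then show ?case using sp_add assms by blast
qed

lemma sp_stable:
  assumes st: "set_pow G X k = set_pow G X (Suc k)"
  shows "set_pow G X (k + d) = set_pow G X k"
proof (induction d)
  case 0 then show ?case by simp
next
  case (Suc d)
  have "set_pow G X (k + Suc d) = set_pow G X (Suc (k + d))" by simp
  also have "\<dots> = set_pow G X (Suc k)" using Suc.IH by (simp only: set_pow.simps)
  also have "\<dots> = set_pow G X k" using st by (rule sym)
  finally show ?case .
qed

end

lemma mu_zero:
  assumes "left_invariant_mean G \<mu>"
  shows "\<mu> (\<lambda>x. 0) = 0"
proof -
  have "(\<lambda>_. 1::real) \<in> linf G" unfolding linf_def by auto
  have hom: "\<forall>f\<in>linf G. \<forall>c. \<mu> (\<lambda>x. c * f x) = c * \<mu> f"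
    using assms unfolding left_invariant_mean_def by blast
  have "\<mu> (\<lambda>x. 0 * 1) = 0 * \<mu> (\<lambda>_. 1)" using hom[rule_format, OF \<open>(\<lambda>_. 1::real) \<in> linf G\<close>, of 0] by simp
  then show ?thesis by simp
qed

lemma linf_01:
  assumes "finite S" "\<And>j x. 0 \<le> f j x \<and> f j x \<le> 1"
  shows "(\<lambda>x. \<Sum>j\<in>S. f j x) \<in> linf G"
proof -
  have "\<bar>\<Sum>j\<in>S. f j x\<bar> \<le> real (card S)" for x
  proof -
    have "0 \<le> (\<Sum>j\<in>S. f j x)" using assms by (simp add: sum_nonneg)
    moreover have "(\<Sum>j\<in>S. f j x) \<le> (\<Sum>j\<in>S. 1)" using assms by (intro sum_mono) auto
    ultimately show ?thesis by simp
  qed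
  then show ?thesis unfolding linf_def by blast
qed

lemma mu_sum:
  assumes "left_invariant_mean G \<mu>" "finite S" "\<And>j x. 0 \<le> f j x \<and> f j x \<le> 1"
  shows "\<mu> (\<lambda>x. \<Sum>j\<in>S. f j x) = (\<Sum>j\<in>S. \<mu> (f j))"
  using assms(2)
proof (induction S rule: finite_induct)
  case empty then show ?case using mu_zero[OF assms(1)] by simp
next
  case (insert a S)
  have fa: "f a \<in> linf G" using linf_01[of "{a}" f G] assms(3) by simp
  have fs: "(\<lambda>x. \<Sum>j\<in>S. f j x) \<in> linf G" using linf_01[of S f G] assms(3) insert by simp
  have "\<mu> (\<lambda>x. \<Sum>j\<in>insert a S. f j x) = \<mu> (\<lambda>x. f a x + (\<Sum>j\<in>S. f j x))"
    using insert by simp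
  also have "\<dots> = \<mu> (f a) + \<mu> (\<lambda>x. \<Sum>j\<in>S. f j x)"
  proof -
    have add: "\<forall>f\<in>linf G. \<forall>g\<in>linf G. \<mu> (\<lambda>x. f x + g x) = \<mu> f + \<mu> g"
      using assms(1) unfolding left_invariant_mean_def by blast
    show ?thesis by (rule add[rule_format, OF fa fs])
  qed
  finally show ?case using insert by simp
qed

theorem lemma5p4:
  fixes G (structure) and \<mu> :: "('a \<Rightarrow> real) \<Rightarrow> real" and X :: "'a set" and m :: nat
  assumes "group G"
    and "left_invariant_mean G \<mu>"
    and "X \<subseteq> carrier G"
    and "\<forall>x\<in>X. inv x \<in> X"
    and "\<one> \<in> X"
    and "m \<ge> 1"
    and "mean_measure \<mu> X \<ge> 1 / real m"
  shows "generate G X = set_pow G X (3 * m - 1)"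
proof (cases "set_pow G X (3 * m - 1) = set_pow G X (Suc (3 * m - 1))")
  case True
  show ?thesis
  proof
    show "set_pow G X (3 * m - 1) \<subseteq> generate G X" using group.sp_gen[OF assms(1,3)] .
    show "generate G X \<subseteq> set_pow G X (3 * m - 1)"
    proof
      fix z assume "z \<in> generate G X"
      then obtain k where k: "z \<in> set_pow G X k" using group.gen_sp[OF assms(1,3,4)] by blast
      show "z \<in> set_pow G X (3 * m - 1)"
      proof (cases "k \<le> 3 * m - 1")
        case True then show ?thesis using k group.sp_mono[OF assms(1,3,5)] by blast
      next
        case False
        then have "k = (3 * m - 1) + (k - (3*m - 1))" by simp
        then show ?thesis using k group.sp_stable[OF assms(1) True, of "k - (3*m - 1)"] by simp
      qed
    qed
  qed
next
  case False
  note grp = assms(1)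
  interpret group G by fact
  have Xc: "X \<subseteq> carrier G" by fact
  have neq: "set_pow G X (3*j - 1) \<noteq> set_pow G X (3*j)" if "1 \<le> j" "j \<le> m" for j
  proof
    assume eq: "set_pow G X (3*j - 1) = set_pow G X (3*j)"
    have s: "Suc (3*j-1) = 3*j" using that by simp
    have "set_pow G X ((3*j - 1) + d) = set_pow G X (3*j - 1)" for d
      using group.sp_stable[OF grp, of X "3*j-1" d] eq s by simp
    from this[of "3*m - 1 - (3*j-1)"] this[of "Suc (3*m - 1) - (3*j-1)"] that
    have "set_pow G X (3 * m - 1) = set_pow G X (Suc (3 * m - 1))" by simp
    with False show False by simp
  qed
  define g where "g j = (SOME y. y \<in> set_pow G X (3*j) \<and> (1 \<le> j \<longrightarrow> y \<notin> set_pow G X (3*j - 1)))" for j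
  have gprop: "g j \<in> set_pow G X (3*j) \<and> (1 \<le> j \<longrightarrow> g j \<notin> set_pow G X (3*j - 1))" if "j \<le> m" for j
    unfolding g_def
  proof (rule someI_ex)
    show "\<exists>y. y \<in> set_pow G X (3*j) \<and> (1 \<le> j \<longrightarrow> y \<notin> set_pow G X (3*j - 1))"
    proof (cases "j = 0")
      case True then show ?thesis by simp
    next
      case False
      have "set_pow G X (3*j - 1) \<subseteq> set_pow G X (3*j)"
        using group.sp_mono[OF grp Xc assms(5)] by simp
      moreover have "set_pow G X (3*j - 1) \<noteq> set_pow G X (3*j)" using neq[of j] False that by simp
      ultimately obtain y where "y \<in> set_pow G X (3*j)" "y \<notin> set_pow G X (3*j - 1)" by blast
      then show ?thesis by blast
    qed
  qed
  have gc: "g j \<in> carrier G" if "j \<le> m" for j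
    using gprop[OF that] group.sp_carrier[OF grp Xc] by blast
  have disj: False if ij: "i < j" "j \<le> m" and x: "x \<in> carrier G"
      and a: "inv (g i) \<otimes> x \<in> X" and b: "inv (g j) \<otimes> x \<in> X" for i j x
  proof -
    define a' where "a' = inv (g i) \<otimes> x"
    define b' where "b' = inv (g j) \<otimes> x"
    have gi: "g i \<in> carrier G" "g j \<in> carrier G" using gc ij by auto
    have a'c: "a' \<in> carrier G" "b' \<in> carrier G" using a b Xc a'_def b'_def by auto
    have xa: "x = g i \<otimes> a'" unfolding a'_def using gi x
      by (simp add: m_assoc[symmetric] r_inv)
    have xb: "g j = x \<otimes> inv b'" unfolding b'_def using gi x
      by (simp add: inv_mult_group m_assoc[symmetric] r_inv)
    have "g j = g i \<otimes> (a' \<otimes> inv b')" using xa xb gi a'c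
      by (simp add: m_assoc)
    moreover have ab: "a' \<otimes> inv b' \<in> set_pow G X (Suc 0 + Suc 0)"
      using group.sp_add[OF grp Xc] group.sp_one[OF grp Xc] a b a'_def b'_def assms(4) by blast
    moreover have gi3: "g i \<in> set_pow G X (3*i)" using gprop[of i] ij by simp
    ultimately have "g j \<in> set_pow G X (3*i + (Suc 0 + Suc 0))"
      using group.sp_add[OF grp Xc gi3 ab] by simp
    moreover have "3*i + (Suc 0 + Suc 0) \<le> 3*j - 1" using ij by simp
    ultimately have "g j \<in> set_pow G X (3*j - 1)" using group.sp_mono[OF grp Xc assms(5)] by blast
    with gprop[of j] ij show False by simp
  qed
  define f where "f j x = (if inv (g j) \<otimes> x \<in> X then 1 else (0::real))" for j x
  define S where "S = {0..m}"
  have f01: "0 \<le> f j x \<and> f j x \<le> 1" for j x unfolding f_def by simp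
  have fin: "finite S" unfolding S_def by simp
  have ind: "(\<lambda>x. if x \<in> X then 1 else (0::real)) \<in> linf G" unfolding linf_def
    by (rule CollectI, rule exI[of _ 1]) simp
  have muf: "\<mu> (f j) = mean_measure \<mu> X" if "j \<in> S" for j
  proof -
    have "\<mu> (\<lambda>x. (\<lambda>x. if x \<in> X then 1 else (0::real)) (inv (g j) \<otimes> x)) = \<mu> (\<lambda>x. if x \<in> X then 1 else (0::real))"
    proof -
      have il: "\<forall>f\<in>linf G. \<forall>g\<in>carrier G. \<mu> (\<lambda>x. f (inv g \<otimes> x)) = \<mu> f"
        using assms(2) unfolding left_invariant_mean_def by blast
      have "j \<le> m" using that unfolding S_def by simp
      then show ?thesis using il[rule_format, OF ind gc] by simp
    qed
    then show ?thesis unfolding f_def mean_measure_def by simp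
  qed
  have sum_le: "(\<Sum>j\<in>S. f j x) \<le> 1" if x: "x \<in> carrier G" for x
  proof (cases "\<exists>j0\<in>S. inv (g j0) \<otimes> x \<in> X")
    case True
    then obtain j0 where j0: "j0 \<in> S" "inv (g j0) \<otimes> x \<in> X" by blast
    have z: "(\<Sum>j\<in>S - {j0}. f j x) = 0"
    proof (rule sum.neutral, rule ballI)
      fix j assume j: "j \<in> S - {j0}"
      show "f j x = 0"
      proof (rule ccontr)
        assume "f j x \<noteq> 0"
        then have jx: "inv (g j) \<otimes> x \<in> X" unfolding f_def by (auto split: if_splits)
        from j have "j < j0 \<or> j0 < j" by auto
        then show False
          using disj[OF _ _ x] j j0 jx unfolding S_def by auto
      qed
    qed
    have "(\<Sum>j\<in>S. f j x) = f j0 x + (\<Sum>j\<in>S - {j0}. f j x)"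
      using fin j0 by (simp add: sum.remove)
    then show ?thesis using z f01 by simp
  next
    case False
    then have "(\<Sum>j\<in>S. f j x) = 0" unfolding f_def by (intro sum.neutral) auto
    then show ?thesis by simp
  qed
  have fs: "(\<lambda>x. \<Sum>j\<in>S. f j x) \<in> linf G" using linf_01[OF fin f01] .
  define h where "h x = 1 - (\<Sum>j\<in>S. f j x)" for x
  have hl: "h \<in> linf G"
  proof -
    have "\<bar>h x\<bar> \<le> 1 + real (card S)" for x
    proof -
      have "0 \<le> (\<Sum>j\<in>S. f j x)" using f01 by (simp add: sum_nonneg)
      moreover have "(\<Sum>j\<in>S. f j x) \<le> (\<Sum>j\<in>S. 1)" using f01 by (intro sum_mono) auto
      ultimately show ?thesis unfolding h_def by simp
    qed
    then show ?thesis unfolding linf_def by blast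
  qed
  have h0: "0 \<le> \<mu> h"
  proof -
    have pos: "\<forall>f\<in>linf G. (\<forall>x\<in>carrier G. 0 \<le> f x) \<longrightarrow> 0 \<le> \<mu> f"
      using assms(2) unfolding left_invariant_mean_def by blast
    have "\<forall>x\<in>carrier G. 0 \<le> h x" using sum_le unfolding h_def by simp
    then show ?thesis using pos hl by blast
  qed
  have "\<mu> (\<lambda>x. h x + (\<Sum>j\<in>S. f j x)) = \<mu> h + \<mu> (\<lambda>x. \<Sum>j\<in>S. f j x)"
  proof -
    have add: "\<forall>f\<in>linf G. \<forall>g\<in>linf G. \<mu> (\<lambda>x. f x + g x) = \<mu> f + \<mu> g"
      using assms(2) unfolding left_invariant_mean_def by blast
    show ?thesis by (rule add[rule_format, OF hl fs])
  qed
  moreover have "(\<lambda>x. h x + (\<Sum>j\<in>S. f j x)) = (\<lambda>_. 1)" unfolding h_def by auto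
  moreover have "\<mu> (\<lambda>_. 1) = 1" using assms(2) unfolding left_invariant_mean_def by blast
  ultimately have le1: "\<mu> (\<lambda>x. \<Sum>j\<in>S. f j x) \<le> 1" using h0 by simp
  have "\<mu> (\<lambda>x. \<Sum>j\<in>S. f j x) = (\<Sum>j\<in>S. \<mu> (f j))" using mu_sum[OF assms(2) fin f01] .
  also have "\<dots> = (\<Sum>j\<in>S. mean_measure \<mu> X)" using muf by simp
  also have "\<dots> = real (m + 1) * mean_measure \<mu> X" unfolding S_def by simp
  finally have eq: "\<mu> (\<lambda>x. \<Sum>j\<in>S. f j x) = real (m + 1) * mean_measure \<mu> X" .
  have "real (m + 1) * (1 / real m) \<le> real (m + 1) * mean_measure \<mu> X"
    using assms(7) by (intro mult_left_mono) auto
  moreover have "real (m + 1) * (1 / real m) > 1" using assms(6) by (simp add: field_simps)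
  ultimately show ?thesis using eq le1 by simp
qed

end
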